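(* Let $u_0\in H^1_0(\Omega)$. There exists $(y,f)\in L^2(Q_T)\times L^2(q_T)$ such that $(y,f)\in\mathcal{A}(s)$ for all $s\ge0$.
   Context: $\Omega=(0,1)$, $\omega\subset\subset\Omega$ a non-empty open set, $T>0$, $Q_T=\Omega\times(0,T)$, $q_T=\omega\times(0,T)$, $\Sigma_T=\partial\Omega\times(0,T)$. Fix $\widetilde\psi\in C^1(\overline\Omega)$ with $\widetilde\psi\in(0,1)$ in $\Omega$, $\widetilde\psi=0$ on $\partial\Omega$, $|\partial_x\widetilde\psi|>0$ on $\overline{\Omega\setminus\omega}$; $\widehat\psi=\widetilde\psi+6$; fix $0<T_1<\min(1/4,3T/8)$ and $\lambda=\lambda_0\ge1$ fixed. For $s$, $\mu=s\lambda^2e^{2\lambda}$, $\theta\in C^2([0,T))$ with $\theta(t)=1+(1-4t/T)^\mu$ on $[0,T/4]$, $\theta=1$ on $[T/4,T-2T_1]$, $\theta$ increasing on $[T-2T_1,T-T_1]$, $\theta(t)=1/(T-t)$ on $[T-T_1,T)$; $\varphi=\theta(t)(\lambda e^{12\lambda}-e^{\lambda\widehat\psi(x)})$, $\xi=\theta(t)e^{\lambda\widehat\psi(x)}$, $\rho(s)=e^{s\varphi}$, $\rho_0(s)=\xi^{-3/2}\rho(s)$. $\mathcal{A}(s)$ denotes the set of pairs $(y,f)$ with $\rho(s)y\in L^2(Q_T)$, $\rho_0(s)f\in L^2(q_T)$, $\rho_0(s)(\partial_ty-\partial_{xx}y)\in L^2(Q_T)$, $y(\cdot,0)=u_0$ in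 $\Omega$ and $y=0$ on $\Sigma_T$. *)

theory Defs
  imports "HOL-Analysis.Analysis"
begin

definition QT :: "real \<Rightarrow> (real \<times> real) set" where
  "QT T = {0<..<1} \<times> {0<..<T}"

definition qT :: "real set \<Rightarrow> real \<Rightarrow> (real \<times> real) set" where
  "qT \<omega> T = \<omega> \<times> {0<..<T}"

definition L2_on :: "'a::euclidean_space set \<Rightarrow> ('a \<Rightarrow> real) \<Rightarrow> bool" where
  "L2_on A g \<longleftrightarrow> (\<lambda>z. indicator A z * g z) \<in> borel_measurable lebesgue
      \<and> integrable lebesgue (\<lambda>z. indicator A z * (g z)^2)"

text \<open>H^1_0(0,1): a.e. equal to an absolutely continuous function with L^2 derivative
  vanishing at both endpoints.\<close>
definition H10 :: "(real \<Rightarrow> real) \<Rightarrow> bool" where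
  "H10 u \<longleftrightarrow> (\<exists>w v. L2_on {0<..<1} v
      \<and> (\<forall>x\<in>{0..1}. w x = (LINT s:{0..x}|lebesgue. v s))
      \<and> w 1 = 0
      \<and> (AE x in lebesgue. x \<in> {0<..<1} \<longrightarrow> u x = w x))"

definition test_fun :: "(real \<times> real) set \<Rightarrow> (real \<times> real \<Rightarrow> real) \<Rightarrow> (real \<times> real \<Rightarrow> real)
    \<Rightarrow> (real \<times> real \<Rightarrow> real) \<Rightarrow> (real \<times> real \<Rightarrow> real) \<Rightarrow> bool" where
  "test_fun Q \<phi> \<phi>t \<phi>x \<phi>xx \<longleftrightarrow>
     continuous_on UNIV \<phi> \<and> continuous_on UNIV \<phi>t \<and> continuous_on UNIV \<phi>x
     \<and> continuous_on UNIV \<phi>xx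
     \<and> (\<forall>x t. ((\<lambda>t'. \<phi> (x, t')) has_real_derivative \<phi>t (x, t)) (at t))
     \<and> (\<forall>x t. ((\<lambda>x'. \<phi> (x', t)) has_real_derivative \<phi>x (x, t)) (at x))
     \<and> (\<forall>x t. ((\<lambda>x'. \<phi>x (x', t)) has_real_derivative \<phi>xx (x, t)) (at x))
     \<and> (\<exists>K. compact K \<and> K \<subseteq> Q \<and> (\<forall>z. z \<notin> K \<longrightarrow> \<phi> z = 0))"

text \<open>\<partial>_t y - \<partial>_xx y = g in the sense of distributions on Q.\<close>
definition heat_weak :: "(real \<times> real) set \<Rightarrow> (real \<times> real \<Rightarrow> real) \<Rightarrow> (real \<times> real \<Rightarrow> real) \<Rightarrow> bool" where
  "heat_weak Q y g \<longleftrightarrow> (\<forall>\<phi> \<phi>t \<phi>x \<phi>xx. test_fun Q \<phi> \<phi>t \<phi>x \<phi>xx \<longrightarrow>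
      (LINT z|lebesgue. indicator Q z * y z * (- \<phi>t z - \<phi>xx z))
        = (LINT z|lebesgue. indicator Q z * g z * \<phi> z))"

definition psi_hat :: "(real \<Rightarrow> real) \<Rightarrow> real \<Rightarrow> real" where
  "psi_hat \<psi> x = \<psi> x + 6"

definition mu :: "real \<Rightarrow> real \<Rightarrow> real" where
  "mu lam s = s * lam^2 * exp (2 * lam)"

definition theta_adm :: "real \<Rightarrow> real \<Rightarrow> real \<Rightarrow> real \<Rightarrow> (real \<Rightarrow> real) \<Rightarrow> bool" where
  "theta_adm T T1 lam s \<theta> \<longleftrightarrow>
     (\<exists>\<theta>' \<theta>''. (\<forall>t\<in>{0..<T}. (\<theta> has_real_derivative \<theta>' t) (at t within {0..<T})
                 \<and> (\<theta>' has_real_derivative \<theta>'' t) (at t within {0..<T}))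
               \<and> continuous_on {0..<T} \<theta>'')
     \<and> (\<forall>t\<in>{0..T/4}. \<theta> t = 1 + (1 - 4 * t / T) powr (mu lam s))
     \<and> (\<forall>t\<in>{T/4..T - 2*T1}. \<theta> t = 1)
     \<and> mono_on {T - 2*T1..T - T1} \<theta>
     \<and> (\<forall>t\<in>{T - T1..<T}. \<theta> t = 1 / (T - t))"

definition varphi :: "real \<Rightarrow> (real \<Rightarrow> real) \<Rightarrow> (real \<Rightarrow> real) \<Rightarrow> real \<times> real \<Rightarrow> real" where
  "varphi lam \<psi> \<theta> z = \<theta> (snd z) * (lam * exp (12 * lam) - exp (lam * psi_hat \<psi> (fst z)))"

definition xi :: "real \<Rightarrow> (real \<Rightarrow> real) \<Rightarrow> (real \<Rightarrow> real) \<Rightarrow> real \<times> real \<Rightarrow> real" where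
  "xi lam \<psi> \<theta> z = \<theta> (snd z) * exp (lam * psi_hat \<psi> (fst z))"

definition rho :: "real \<Rightarrow> (real \<Rightarrow> real) \<Rightarrow> (real \<Rightarrow> real) \<Rightarrow> real \<Rightarrow> real \<times> real \<Rightarrow> real" where
  "rho lam \<psi> \<theta> s z = exp (s * varphi lam \<psi> \<theta> z)"

definition rho0 :: "real \<Rightarrow> (real \<Rightarrow> real) \<Rightarrow> (real \<Rightarrow> real) \<Rightarrow> real \<Rightarrow> real \<times> real \<Rightarrow> real" where
  "rho0 lam \<psi> \<theta> s z = xi lam \<psi> \<theta> z powr (-3/2) * rho lam \<psi> \<theta> s z"

definition adm_set :: "real set \<Rightarrow> real \<Rightarrow> real \<Rightarrow> (real \<Rightarrow> real) \<Rightarrow> (real \<Rightarrow> real) \<Rightarrow> real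
    \<Rightarrow> (real \<Rightarrow> real) \<Rightarrow> ((real \<times> real \<Rightarrow> real) \<times> (real \<times> real \<Rightarrow> real)) set" where
  "adm_set \<omega> T lam \<psi> \<theta> s u0 = {(y, f).
       L2_on (QT T) (\<lambda>z. rho lam \<psi> \<theta> s z * y z)
     \<and> L2_on (qT \<omega> T) (\<lambda>z. rho0 lam \<psi> \<theta> s z * f z)
     \<and> (\<exists>g. heat_weak (QT T) y g \<and> L2_on (QT T) (\<lambda>z. rho0 lam \<psi> \<theta> s z * g z))
     \<and> continuous_on ({0..1} \<times> {0..<T}) y
     \<and> (AE x in lebesgue. x \<in> {0<..<1} \<longrightarrow> y (x, 0) = u0 x)
     \<and> (\<forall>t\<in>{0<..<T}. y (0, t) = 0 \<and> y (1, t) = 0)}"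

definition psi_adm :: "real set \<Rightarrow> (real \<Rightarrow> real) \<Rightarrow> bool" where
  "psi_adm \<omega> \<psi> \<longleftrightarrow>
     (\<exists>\<psi>'. continuous_on {0..1} \<psi>'
        \<and> (\<forall>x\<in>{0..1}. (\<psi> has_real_derivative \<psi>' x) (at x within {0..1}))
        \<and> (\<forall>x\<in>closure ({0<..<1} - \<omega>). \<bar>\<psi>' x\<bar> > 0))
     \<and> (\<forall>x\<in>{0<..<1}. 0 < \<psi> x \<and> \<psi> x < 1)
     \<and> \<psi> 0 = 0 \<and> \<psi> 1 = 0"

end

theory Submission
  imports Defs "HOL-Probability.Distributions"
begin



abbreviation N :: "real \<Rightarrow> real" where "N \<equiv> std_normal_density"

lemma N_integrable: "integrable lborel N"
  using integrable_std_normal_moment[of 0] by simp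

lemma N_integral: "integral\<^sup>L lborel N = 1"
  using integral_std_normal_moment_even[of 0] by simp

lemma N_sym: "N (- z) = N z"
  by (simp add: std_normal_density_def)

lemma N_nonneg: "0 \<le> N z" by simp

lemma N_cont: "continuous_on UNIV N"
  unfolding normal_density_def by (intro continuous_intros) auto

lemma N_meas[measurable]: "N \<in> borel_measurable borel"
  using N_cont by (rule borel_measurable_continuous_onI)

definition Yf :: "(real \<Rightarrow> real) \<Rightarrow> real \<times> real \<Rightarrow> real" where
  "Yf W p = (\<integral>z. W (fst p + sqrt (2 * snd p) * z) * N z \<partial>lborel)"

context
  fixes W :: "real \<Rightarrow> real" and B :: real
  assumes Wc: "continuous_on UNIV W" and WB: "\<And>x. \<bar>W x\<bar> \<le> B"
begin

lemma W_meas[measurable]: "W \<in> borel_measurable borel"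
  using Wc by (rule borel_measurable_continuous_onI)

lemma W_isCont: "isCont W x"
  using Wc by (simp add: continuous_on_eq_continuous_at)

lemma integrand_integrable: "integrable lborel (\<lambda>z. W (a + c * z) * N z)"
proof (rule Bochner_Integration.integrable_bound)
  show "integrable lborel (\<lambda>z. B * N z)" by (intro integrable_mult_right N_integrable)
  show "(\<lambda>z. W (a + c * z) * N z) \<in> borel_measurable lborel" by measurable
  show "AE x in lborel. norm (W (a + c * x) * N x) \<le> norm (B * N x)"
  proof (rule AE_I2)
    fix x
    have "\<bar>W (a + c * x)\<bar> \<le> \<bar>B\<bar>" using WB[of "a + c * x"] by linarith
    then show "norm (W (a + c * x) * N x) \<le> norm (B * N x)"
      by (simp add: abs_mult mult_right_mono)
  qed
qed

lemma Y_bound: "\<bar>Yf W p\<bar> \<le> B"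
proof -
  have "\<bar>Yf W p\<bar> \<le> (\<integral>z. \<bar>W (fst p + sqrt (2 * snd p) * z) * N z\<bar> \<partial>lborel)"
    unfolding Yf_def by (rule integral_abs_bound)
  also have "\<dots> \<le> (\<integral>z. B * N z \<partial>lborel)"
    using WB integrable_abs[OF integrand_integrable]
    by (intro integral_mono) (auto simp: abs_mult intro!: mult_right_mono integrable_mult_right N_integrable)
  also have "\<dots> = B" by (simp add: N_integral)
  finally show ?thesis .
qed

lemma Y_init: "Yf W (x, 0) = W x"
  by (simp add: Yf_def N_integral)

lemma Y_meas[measurable]: "Yf W \<in> borel_measurable borel"
proof -
  have c: "continuous_on UNIV (\<lambda>q::(real\<times>real)\<times>real. W (fst (fst q) + sqrt (2 * snd (fst q)) * snd q) * N (snd q))"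
    by (intro continuous_intros continuous_on_compose2[OF Wc] continuous_on_compose2[OF N_cont]) auto
  have m0: "(\<lambda>q::(real\<times>real)\<times>real. W (fst (fst q) + sqrt (2 * snd (fst q)) * snd q) * N (snd q)) \<in> borel_measurable borel"
    using c by (rule borel_measurable_continuous_onI)
  have e1: "sets (borel \<Otimes>\<^sub>M borel) = sets (borel :: ((real\<times>real)\<times>real) measure)"
    by (rule arg_cong[where f=sets, OF borel_prod])
  have e2: "sets (borel \<Otimes>\<^sub>M lborel) = sets (borel \<Otimes>\<^sub>M (borel :: real measure) :: ((real\<times>real)\<times>real) measure)"
    by (rule sets_pair_measure_cong[OF refl sets_lborel])
  have m1: "(\<lambda>q::(real\<times>real)\<times>real. W (fst (fst q) + sqrt (2 * snd (fst q)) * snd q) * N (snd q)) \<in> borel_measurable (borel \<Otimes>\<^sub>M lborel)"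
    apply (subst measurable_cong_sets[OF e2 refl])
    apply (subst measurable_cong_sets[OF e1 refl])
    by (rule m0)
  have "(\<lambda>p. \<integral>z. W (fst p + sqrt (2 * snd p) * z) * N z \<partial>lborel) \<in> borel_measurable borel"
    apply (rule lborel.borel_measurable_lebesgue_integral)
    using m1 by (simp add: case_prod_beta')
  then show ?thesis unfolding Yf_def[abs_def] .
qed

lemma Y_cont: "continuous_on (UNIV \<times> {0..}) (Yf W)"
proof (rule continuous_on_sequentiallyI)
  fix u :: "nat \<Rightarrow> real \<times> real" and a
  assume u: "\<forall>n. u n \<in> UNIV \<times> {0..}" and a: "a \<in> UNIV \<times> {0..}" and lim: "u \<longlonglongrightarrow> a"
  show "(\<lambda>n. Yf W (u n)) \<longlonglongrightarrow> Yf W a"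
    unfolding Yf_def
  proof (rule integral_dominated_convergence[where w="\<lambda>z. B * N z"])
    show "(\<lambda>z. W (fst a + sqrt (2 * snd a) * z) * N z) \<in> borel_measurable lborel" by measurable
    show "\<And>i. (\<lambda>z. W (fst (u i) + sqrt (2 * snd (u i)) * z) * N z) \<in> borel_measurable lborel" by measurable
    show "integrable lborel (\<lambda>z. B * N z)" by (intro integrable_mult_right N_integrable)
    show "AE z in lborel. (\<lambda>i. W (fst (u i) + sqrt (2 * snd (u i)) * z) * N z) \<longlonglongrightarrow> W (fst a + sqrt (2 * snd a) * z) * N z"
    proof (intro AE_I2 tendsto_mult tendsto_const)
      fix z
      have "(\<lambda>i. fst (u i) + sqrt (2 * snd (u i)) * z) \<longlonglongrightarrow> fst a + sqrt (2 * snd a) * z"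
        using lim by (intro tendsto_intros)
      then show "(\<lambda>i. W (fst (u i) + sqrt (2 * snd (u i)) * z)) \<longlonglongrightarrow> W (fst a + sqrt (2 * snd a) * z)"
        by (rule isCont_tendsto_compose[OF W_isCont])
    qed
    show "\<And>i. AE z in lborel. norm (W (fst (u i) + sqrt (2 * snd (u i)) * z) * N z) \<le> B * N z"
      using WB by (auto simp: abs_mult intro!: mult_right_mono)
  qed
qed

lemma Y_left: assumes odd: "\<And>x. W (- x) = - W x" shows "Yf W (0, t) = 0"
proof -
  let ?f = "\<lambda>z. W (sqrt (2 * t) * z) * N z"
  have "integral\<^sup>L lborel ?f = \<bar>-1\<bar> *\<^sub>R integral\<^sup>L lborel (\<lambda>z. ?f (0 + (-1) * z))"
    by (rule lborel_integral_real_affine) simp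
  also have "\<dots> = - integral\<^sup>L lborel ?f"
    by (simp add: odd N_sym)
  finally show ?thesis by (simp add: Yf_def)
qed

lemma Y_right: assumes odd: "\<And>x. W (1 + x) = - W (1 - x)" shows "Yf W (1, t) = 0"
proof -
  let ?f = "\<lambda>z. W (1 + sqrt (2 * t) * z) * N z"
  have "integral\<^sup>L lborel ?f = \<bar>-1\<bar> *\<^sub>R integral\<^sup>L lborel (\<lambda>z. ?f (0 + (-1) * z))"
    by (rule lborel_integral_real_affine) simp
  also have "\<dots> = - integral\<^sup>L lborel ?f"
    using odd[of "sqrt (2 * t) * _"] by (simp add: N_sym)
  finally show ?thesis by (simp add: Yf_def)
qed

end




definition Gk :: "real \<Rightarrow> real \<Rightarrow> real" where
  "Gk u t = exp (- u\<^sup>2 / (4 * t) - ln (4 * pi * t) / 2)"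

lemma Gk_N: assumes t: "t > 0" shows "Gk u t = N (u / sqrt (2 * t)) / sqrt (2 * t)"
proof -
  have e: "exp (- (ln (4 * pi * t) / 2)) = 1 / sqrt (4 * pi * t)"
  proof -
    have "exp (ln (4 * pi * t) / 2) = (4 * pi * t) powr (1/2)"
      using t by (simp add: powr_def)
    also have "\<dots> = sqrt (4 * pi * t)" by (rule powr_half_sqrt) (use t in simp)
    finally show ?thesis by (simp add: exp_minus field_simps)
  qed
  have s: "sqrt (4 * pi * t) = sqrt (2 * pi) * sqrt (2 * t)"
    by (simp add: real_sqrt_mult[symmetric])
  have "Gk u t = exp (- u\<^sup>2 / (4 * t)) * exp (- (ln (4 * pi * t) / 2))"
    unfolding Gk_def exp_add[symmetric] by (simp add: diff_divide_distrib)
  also have "\<dots> = exp (- u\<^sup>2 / (4 * t)) / (sqrt (2 * pi) * sqrt (2 * t))"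
    unfolding e s by simp
  also have "\<dots> = N (u / sqrt (2 * t)) / sqrt (2 * t)"
  proof -
    have q: "(u / sqrt (2 * t))\<^sup>2 = u\<^sup>2 / (2 * t)" using t by (simp add: power_divide)
    have q2: "- (u\<^sup>2 / (2 * t)) / 2 = - u\<^sup>2 / (4 * t)" by simp
    show ?thesis unfolding std_normal_density_def q q2 by simp
  qed
  finally show ?thesis .
qed

lemma Gk_pos: "Gk u t > 0" by (simp add: Gk_def)

lemma Gk_dt: assumes t: "t > 0"
  shows "((\<lambda>t. Gk u t) has_real_derivative Gk u t * (u\<^sup>2 / (4 * t\<^sup>2) - 1 / (2 * t))) (at t)"
proof -
  have "((\<lambda>t. - u\<^sup>2 / (4 * t) - ln (4 * pi * t) / 2) has_real_derivative (u\<^sup>2 / (4 * t\<^sup>2) - 1 / (2 * t))) (at t)"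
    apply (rule derivative_eq_intros refl | use t in force)+
    using t apply (simp add: field_simps power2_eq_square)
    done
  from DERIV_exp[THEN DERIV_chain2, OF this] show ?thesis unfolding Gk_def .
qed

lemma Gk_dx: assumes t: "t > 0"
  shows "((\<lambda>x. Gk (z - x) t) has_real_derivative Gk (z - x) t * ((z - x) / (2 * t))) (at x)"
proof -
  have "((\<lambda>x. - (z - x)\<^sup>2 / (4 * t) - ln (4 * pi * t) / 2) has_real_derivative ((z - x) / (2 * t))) (at x)"
    apply (rule derivative_eq_intros refl | use t in force)+
    using t apply (simp add: field_simps power2_eq_square)
    done
  from DERIV_exp[THEN DERIV_chain2, OF this] show ?thesis unfolding Gk_def .
qed

lemma Gk_dxx: assumes t: "t > 0"
  shows "((\<lambda>x. Gk (z - x) t * ((z - x) / (2 * t))) has_real_derivative Gk (z - x) t * ((z - x)\<^sup>2 / (4 * t\<^sup>2) - 1 / (2 * t))) (at x)"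
proof -
  have "((\<lambda>x. (z - x) / (2 * t)) has_real_derivative ((0 - 1) / (2 * t))) (at x)"
    by (intro DERIV_cdivide DERIV_diff DERIV_const DERIV_ident)
  from DERIV_mult[OF Gk_dx[OF t, of z x] this] show ?thesis
  proof (rule DERIV_cong)
    have "a * (c / (2 * t)) * (c / (2 * t)) + (0 - 1) / (2 * t) * a = a * (c\<^sup>2 / (4 * t\<^sup>2) - 1 / (2 * t))" for a c
      using t by (simp add: power2_eq_square field_simps)
    then show "Gk (z - x) t * ((z - x) / (2 * t)) * ((z - x) / (2 * t)) + (0 - 1) / (2 * t) * Gk (z - x) t = Gk (z - x) t * ((z - x)\<^sup>2 / (4 * t\<^sup>2) - 1 / (2 * t))" .
  qed
qed


lemma Gk_cont: "continuous_on {p. snd p > 0} (\<lambda>p. Gk (z - fst p) (snd p))"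
  unfolding Gk_def by (intro continuous_intros) auto

lemma Gk_dx_cont: "continuous_on {p. snd p > 0} (\<lambda>p. Gk (z - fst p) (snd p) * ((z - fst p) / (2 * snd p)))"
  unfolding Gk_def by (intro continuous_intros) auto

lemma Gk_dd_cont: "continuous_on {p. snd p > 0} (\<lambda>p. Gk (z - fst p) (snd p) * ((z - fst p)\<^sup>2 / (4 * (snd p)\<^sup>2) - 1 / (2 * snd p)))"
  unfolding Gk_def by (intro continuous_intros) auto

lemma core_z:
  fixes \<psi> \<psi>t \<psi>x \<psi>xx :: "real \<times> real \<Rightarrow> real" and a b c d z :: real
  assumes c1: "continuous_on UNIV \<psi>" and c2: "continuous_on UNIV \<psi>t"
    and c3: "continuous_on UNIV \<psi>x" and c4: "continuous_on UNIV \<psi>xx"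
    and dt: "\<And>x t. ((\<lambda>t'. \<psi> (x, t')) has_real_derivative \<psi>t (x, t)) (at t)"
    and dx: "\<And>x t. ((\<lambda>x'. \<psi> (x', t)) has_real_derivative \<psi>x (x, t)) (at x)"
    and dxx: "\<And>x t. ((\<lambda>x'. \<psi>x (x', t)) has_real_derivative \<psi>xx (x, t)) (at x)"
    and ab: "a < b" and cpos: "0 < c" and cd: "c < d"
    and van: "\<And>p. p \<notin> {a<..<b} \<times> {c<..<d} \<Longrightarrow> \<psi> p = 0 \<and> \<psi>x p = 0 \<and> \<psi>t p = 0 \<and> \<psi>xx p = 0"
  shows "(\<integral>p. Gk (z - fst p) (snd p) * (\<psi>t p + \<psi>xx p) \<partial>lborel) = 0"
proof -
  define H where "H p = Gk (z - fst p) (snd p)" for p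
  define Hx where "Hx p = Gk (z - fst p) (snd p) * ((z - fst p) / (2 * snd p))" for p
  define Hd where "Hd p = Gk (z - fst p) (snd p) * ((z - fst p)\<^sup>2 / (4 * (snd p)\<^sup>2) - 1 / (2 * snd p))" for p
  define F where "F p = H p * (\<psi>t p + \<psi>xx p)" for p
  define F1 where "F1 p = H p * \<psi>t p + Hd p * \<psi> p" for p
  define F2 where "F2 p = H p * \<psi>xx p - Hd p * \<psi> p" for p
  define C where "C = cbox (a, c) (b, d)"
  have Csub: "C \<subseteq> {p. snd p > 0}"
    using cpos by (auto simp: C_def cbox_Pair_eq)
  have cH: "continuous_on C H" unfolding H_def
    by (rule continuous_on_subset[OF Gk_cont Csub])
  have cHx: "continuous_on C Hx" unfolding Hx_def
    by (rule continuous_on_subset[OF Gk_dx_cont Csub])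
  have cHd: "continuous_on C Hd" unfolding Hd_def
    by (rule continuous_on_subset[OF Gk_dd_cont Csub])
  have cF: "continuous_on C F" unfolding F_def
    by (intro continuous_intros cH continuous_on_subset[OF c2] continuous_on_subset[OF c4]) auto
  have cF1: "continuous_on C F1" unfolding F1_def
    by (intro continuous_intros cH cHd continuous_on_subset[OF c1] continuous_on_subset[OF c2]) auto
  have cF2: "continuous_on C F2" unfolding F2_def
    by (intro continuous_intros cH cHd continuous_on_subset[OF c1] continuous_on_subset[OF c4]) auto
  have FF: "F p = F1 p + F2 p" for p
    unfolding F_def F1_def F2_def by (simp add: algebra_simps)
  have Fvan: "F p = indicator C p *\<^sub>R F p" for p
  proof (cases "p \<in> C")
    case False
    then have "p \<notin> {a<..<b} \<times> {c<..<d}" by (auto simp: C_def cbox_Pair_eq)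
    then show ?thesis using van[of p] by (simp add: F_def)
  qed simp
  have compC: "compact C" by (simp add: C_def)
  have "(\<integral>p. F p \<partial>lborel) = (\<integral>p. indicator C p *\<^sub>R F p \<partial>lborel)"
    by (subst Fvan) simp
  also have "\<dots> = integral C F"
    using set_borel_integral_eq_integral(2)[of C F] borel_integrable_compact[OF compC cF]
    by (simp add: set_integrable_def set_lebesgue_integral_def)
  also have "\<dots> = integral C F1 + integral C F2"
    unfolding FF[abs_def]
    by (rule integral_add) (auto simp: C_def intro!: integrable_continuous cF1[unfolded C_def] cF2[unfolded C_def])
  also have "integral C F1 = 0"
  proof -
    have "integral C F1 = integral {a..b} (\<lambda>x. integral {c..d} (\<lambda>t. F1 (x, t)))"
      unfolding C_def using integral_prod_continuous[OF cF1[unfolded C_def]] by (simp add: cbox_interval)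
    also have "\<dots> = integral {a..b} (\<lambda>x. 0)"
    proof (rule integral_cong)
      fix x assume x: "x \<in> {a..b}"
      have "((\<lambda>t. F1 (x, t)) has_integral (H (x, d) * \<psi> (x, d) - H (x, c) * \<psi> (x, c))) {c..d}"
      proof (rule fundamental_theorem_of_calculus)
        show "c \<le> d" using cd by simp
        fix t assume t: "t \<in> {c..d}"
        then have tpos: "t > 0" using cpos by auto
        have e1: "(\<lambda>t. H (x, t) * \<psi> (x, t)) = (\<lambda>t. Gk (z - x) t * \<psi> (x, t))"
          by (simp add: H_def)
        have e2: "Gk (z - x) t * ((z - x)\<^sup>2 / (4 * t\<^sup>2) - 1 / (2 * t)) * \<psi> (x, t) + \<psi>t (x, t) * Gk (z - x) t = F1 (x, t)"
          unfolding F1_def H_def Hd_def by simp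
        have "((\<lambda>t. Gk (z - x) t * \<psi> (x, t)) has_real_derivative Gk (z - x) t * ((z - x)\<^sup>2 / (4 * t\<^sup>2) - 1 / (2 * t)) * \<psi> (x, t) + \<psi>t (x, t) * Gk (z - x) t) (at t)"
          by (rule DERIV_mult[OF Gk_dt[OF tpos] dt])
        then have "((\<lambda>t. H (x, t) * \<psi> (x, t)) has_real_derivative F1 (x, t)) (at t)"
          unfolding e1 e2 .
        then show "((\<lambda>t. H (x, t) * \<psi> (x, t)) has_vector_derivative F1 (x, t)) (at t within {c..d})"
          unfolding has_real_derivative_iff_has_vector_derivative[symmetric]
          by (rule has_field_derivative_at_within)
      qed
      moreover have "\<psi> (x, d) = 0" "\<psi> (x, c) = 0" using van by auto
      ultimately show "integral {c..d} (\<lambda>t. F1 (x, t)) = 0" by (simp add: integral_unique)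
    qed
    finally show ?thesis by simp
  qed
  also have "integral C F2 = 0"
  proof -
    have "integral C F2 = integral {a..b} (\<lambda>x. integral {c..d} (\<lambda>t. F2 (x, t)))"
      unfolding C_def using integral_prod_continuous[OF cF2[unfolded C_def]] by (simp add: cbox_interval)
    also have "\<dots> = integral {c..d} (\<lambda>t. integral {a..b} (\<lambda>x. F2 (x, t)))"
      using integral_swap_continuous[of a c b d "\<lambda>x t. F2 (x, t)"] cF2 by (simp add: C_def cbox_interval)
    also have "\<dots> = integral {c..d} (\<lambda>t. 0)"
    proof (rule integral_cong)
      fix t assume t: "t \<in> {c..d}"
      then have tpos: "t > 0" using cpos by auto
      have "((\<lambda>x. F2 (x, t)) has_integral ((H (b, t) * \<psi>x (b, t) - Hx (b, t) * \<psi> (b, t)) - (H (a, t) * \<psi>x (a, t) - Hx (a, t) * \<psi> (a, t)))) {a..b}"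
      proof (rule fundamental_theorem_of_calculus)
        show "a \<le> b" using ab by simp
        fix x assume x: "x \<in> {a..b}"
        have d1: "((\<lambda>x. Gk (z - x) t * \<psi>x (x, t)) has_real_derivative Gk (z - x) t * ((z - x) / (2 * t)) * \<psi>x (x, t) + \<psi>xx (x, t) * Gk (z - x) t) (at x)"
          by (rule DERIV_mult[OF Gk_dx[OF tpos] dxx])
        have d2: "((\<lambda>x. Gk (z - x) t * ((z - x) / (2 * t)) * \<psi> (x, t)) has_real_derivative Gk (z - x) t * ((z - x)\<^sup>2 / (4 * t\<^sup>2) - 1 / (2 * t)) * \<psi> (x, t) + \<psi>x (x, t) * (Gk (z - x) t * ((z - x) / (2 * t)))) (at x)"
          by (rule DERIV_mult[OF Gk_dxx[OF tpos] dx])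
        have e1: "(\<lambda>x. H (x, t) * \<psi>x (x, t) - Hx (x, t) * \<psi> (x, t)) = (\<lambda>x. Gk (z - x) t * \<psi>x (x, t) - Gk (z - x) t * ((z - x) / (2 * t)) * \<psi> (x, t))"
          by (simp add: H_def Hx_def)
        have e2: "(Gk (z - x) t * ((z - x) / (2 * t)) * \<psi>x (x, t) + \<psi>xx (x, t) * Gk (z - x) t) - (Gk (z - x) t * ((z - x)\<^sup>2 / (4 * t\<^sup>2) - 1 / (2 * t)) * \<psi> (x, t) + \<psi>x (x, t) * (Gk (z - x) t * ((z - x) / (2 * t)))) = F2 (x, t)"
          unfolding F2_def H_def Hd_def by simp
        have "((\<lambda>x. H (x, t) * \<psi>x (x, t) - Hx (x, t) * \<psi> (x, t)) has_real_derivative F2 (x, t)) (at x)"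
          using DERIV_diff[OF d1 d2] unfolding e1 e2 .
        then show "((\<lambda>x. H (x, t) * \<psi>x (x, t) - Hx (x, t) * \<psi> (x, t)) has_vector_derivative F2 (x, t)) (at x within {a..b})"
          unfolding has_real_derivative_iff_has_vector_derivative[symmetric]
          by (rule has_field_derivative_at_within)
      qed
      moreover have "\<psi> (a, t) = 0" "\<psi> (b, t) = 0" "\<psi>x (a, t) = 0" "\<psi>x (b, t) = 0" using van by auto
      ultimately show "integral {a..b} (\<lambda>x. F2 (x, t)) = 0" by (simp add: integral_unique)
    qed
    finally show ?thesis by simp
  qed
  finally show ?thesis unfolding F_def H_def by simp
qed




lemma cont_meas_pair:
  fixes g :: "('a::euclidean_space \<times> 'b::euclidean_space) \<Rightarrow> real"
  assumes "continuous_on UNIV g"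
  shows "g \<in> borel_measurable (lborel \<Otimes>\<^sub>M lborel)"
proof -
  have m0: "g \<in> borel_measurable borel" using assms by (rule borel_measurable_continuous_onI)
  have e1: "sets (borel \<Otimes>\<^sub>M borel) = sets (borel :: ('a \<times> 'b) measure)"
    by (rule arg_cong[where f=sets, OF borel_prod])
  have e2: "sets (lborel \<Otimes>\<^sub>M lborel) = sets (borel \<Otimes>\<^sub>M borel :: ('a \<times> 'b) measure)"
    by (rule sets_pair_measure_cong[OF sets_lborel sets_lborel])
  show ?thesis
    apply (subst measurable_cong_sets[OF e2 refl])
    apply (subst measurable_cong_sets[OF e1 refl])
    by (rule m0)
qed

lemma Gk_shift_integrable: assumes t: "t > 0" shows "integrable lborel (\<lambda>z. Gk (z - x) t)"
proof -
  have c: "sqrt (2 * t) > 0" using t by simp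
  have "integrable lborel (\<lambda>z. N z / sqrt (2 * t))"
    by (intro integrable_divide_zero N_integrable)
  moreover have "(\<lambda>z. N z / sqrt (2 * t)) = (\<lambda>z. Gk ((x + sqrt (2 * t) * z) - x) t)"
    using c t by (simp add: Gk_N)
  ultimately have "integrable lborel (\<lambda>z. (\<lambda>z. Gk (z - x) t) (x + sqrt (2 * t) * z))" by simp
  then show ?thesis using lborel_integrable_real_affine_iff[of "sqrt (2 * t)" "\<lambda>z. Gk (z - x) t" x] c by simp
qed

lemma Gk_shift_integral: assumes t: "t > 0" shows "(\<integral>z. Gk (z - x) t \<partial>lborel) = 1"
proof -
  have c: "sqrt (2 * t) > 0" using t by simp
  have "(\<integral>z. Gk (z - x) t \<partial>lborel) = \<bar>sqrt (2 * t)\<bar> *\<^sub>R (\<integral>z. Gk ((x + sqrt (2 * t) * z) - x) t \<partial>lborel)"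
    using lborel_integral_real_affine[of "sqrt (2 * t)" "\<lambda>z. Gk (z - x) t" x] c by simp
  also have "\<dots> = sqrt (2 * t) * (\<integral>z. N z / sqrt (2 * t) \<partial>lborel)"
    using c t by (simp add: Gk_N)
  also have "\<dots> = 1" using c by (simp add: N_integral)
  finally show ?thesis .
qed

context
  fixes W :: "real \<Rightarrow> real" and B :: real
  assumes Wc: "continuous_on UNIV W" and WB: "\<And>x. \<bar>W x\<bar> \<le> B"
begin

lemma Y_conv: assumes t: "t > 0" shows "Yf W (x, t) = (\<integral>z. W z * Gk (z - x) t \<partial>lborel)"
proof -
  have c: "sqrt (2 * t) > 0" using t by simp
  have "(\<integral>z. W z * Gk (z - x) t \<partial>lborel) = \<bar>sqrt (2 * t)\<bar> *\<^sub>R (\<integral>z. W (x + sqrt (2 * t) * z) * Gk ((x + sqrt (2 * t) * z) - x) t \<partial>lborel)"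
    using lborel_integral_real_affine[of "sqrt (2 * t)" "\<lambda>z. W z * Gk (z - x) t" x] c by simp
  also have "\<dots> = sqrt (2 * t) * (\<integral>z. W (x + sqrt (2 * t) * z) * N z / sqrt (2 * t) \<partial>lborel)"
    using c t by (simp add: Gk_N)
  also have "\<dots> = Yf W (x, t)" using c by (simp add: Yf_def)
  finally show ?thesis ..
qed

end



context
  fixes W :: "real \<Rightarrow> real" and B :: real
  assumes Wc: "continuous_on UNIV W" and WB: "\<And>x. \<bar>W x\<bar> \<le> B"
begin

lemma core:
  fixes \<psi> \<psi>t \<psi>x \<psi>xx :: "real \<times> real \<Rightarrow> real" and a b c d :: real
  assumes c1: "continuous_on UNIV \<psi>" and c2: "continuous_on UNIV \<psi>t"
    and c3: "continuous_on UNIV \<psi>x" and c4: "continuous_on UNIV \<psi>xx"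
    and dt: "\<And>x t. ((\<lambda>t'. \<psi> (x, t')) has_real_derivative \<psi>t (x, t)) (at t)"
    and dx: "\<And>x t. ((\<lambda>x'. \<psi> (x', t)) has_real_derivative \<psi>x (x, t)) (at x)"
    and dxx: "\<And>x t. ((\<lambda>x'. \<psi>x (x', t)) has_real_derivative \<psi>xx (x, t)) (at x)"
    and ab: "a < b" and cpos: "0 < c" and cd: "c < d"
    and van: "\<And>p. p \<notin> {a<..<b} \<times> {c<..<d} \<Longrightarrow> \<psi> p = 0 \<and> \<psi>x p = 0 \<and> \<psi>t p = 0 \<and> \<psi>xx p = 0"
  shows "(\<integral>p. Yf W p * (\<psi>t p + \<psi>xx p) \<partial>lborel) = 0"
proof -
  define P where "P p = \<psi>t p + \<psi>xx p" for p
  have cP: "continuous_on UNIV P" unfolding P_def by (intro continuous_intros c2 c4)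
  have Pvan: "P p = 0" if "snd p \<le> c" for p
  proof -
    have "p \<notin> {a<..<b} \<times> {c<..<d}" using that by (cases p) auto
    then show ?thesis using van[of p] by (simp add: P_def)
  qed
  define C where "C = cbox (a, c) (b, d)"
  have PC: "P p = indicator C p *\<^sub>R P p" for p
  proof (cases "p \<in> C")
    case False
    then have "p \<notin> {a<..<b} \<times> {c<..<d}" by (auto simp: C_def cbox_Pair_eq)
    then show ?thesis using van[of p] by (simp add: P_def)
  qed simp
  have intP: "integrable lborel (\<lambda>p. \<bar>P p\<bar>)"
  proof -
    have "integrable lborel (\<lambda>p. indicator C p *\<^sub>R \<bar>P p\<bar>)"
      by (rule borel_integrable_compact) (auto simp: C_def intro!: continuous_intros continuous_on_subset[OF cP])
    moreover have "(\<lambda>p. indicator C p *\<^sub>R \<bar>P p\<bar>) = (\<lambda>p. \<bar>P p\<bar>)"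
      by (rule ext, subst (2) PC) (simp add: indicator_def)
    ultimately show ?thesis by metis
  qed
  define f where "f q = W (snd q) * Gk (snd q - fst (fst q)) (max c (snd (fst q))) * P (fst q)" for q :: "(real \<times> real) \<times> real"
  have f_eq: "f (p, z) = W z * Gk (z - fst p) (snd p) * P p" for p z
    using Pvan[of p] by (cases "snd p \<le> c") (auto simp: f_def max_def)
  have cf: "continuous_on UNIV f"
    unfolding f_def Gk_def
    using cpos
    by (intro continuous_intros continuous_on_compose2[OF Wc] continuous_on_compose2[OF cP]) auto
  have mf[measurable]: "f \<in> borel_measurable (lborel \<Otimes>\<^sub>M lborel)"
    by (rule cont_meas_pair[OF cf])
  have inner_int: "integrable lborel (\<lambda>z. f (p, z))" for p
  proof (cases "snd p > 0")
    case True
    show ?thesis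
    proof (rule Bochner_Integration.integrable_bound)
      show "integrable lborel (\<lambda>z. B * \<bar>P p\<bar> * Gk (z - fst p) (snd p))"
        by (intro integrable_mult_right Gk_shift_integrable True)
      show "(\<lambda>z. f (p, z)) \<in> borel_measurable lborel"
      proof -
        have "continuous_on UNIV (\<lambda>z. f (p, z))"
          by (rule continuous_on_compose2[OF cf, where f="\<lambda>z. (p, z)"]) (auto intro!: continuous_intros)
        then show ?thesis by (simp add: borel_measurable_continuous_onI)
      qed
      show "AE z in lborel. norm (f (p, z)) \<le> norm (B * \<bar>P p\<bar> * Gk (z - fst p) (snd p))"
      proof (rule AE_I2)
        fix z
        have "\<bar>W z\<bar> \<le> \<bar>B\<bar>" using WB[of z] by linarith
        moreover have g: "0 \<le> \<bar>P p\<bar> * Gk (z - fst p) (snd p)" using Gk_pos[of "z - fst p" "snd p"] by simp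
        ultimately have "\<bar>W z\<bar> * (\<bar>P p\<bar> * Gk (z - fst p) (snd p)) \<le> \<bar>B\<bar> * (\<bar>P p\<bar> * Gk (z - fst p) (snd p))"
          by (rule mult_right_mono)
        then show "norm (f (p, z)) \<le> norm (B * \<bar>P p\<bar> * Gk (z - fst p) (snd p))"
          unfolding f_eq using Gk_pos[of "z - fst p" "snd p"]
          by (simp add: abs_mult algebra_simps)
      qed
    qed
  next
    case False
    then have "P p = 0" using Pvan[of p] cpos by auto
    then show ?thesis unfolding f_eq by simp
  qed
  have inner_eq: "Yf W p * P p = (\<integral>z. f (p, z) \<partial>lborel)" for p
  proof (cases "snd p > 0")
    case True
    have "Yf W p = (\<integral>z. W z * Gk (z - fst p) (snd p) \<partial>lborel)"
      using Y_conv[OF Wc WB True, of "fst p"] by simp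
    then show ?thesis unfolding f_eq by simp
  next
    case False
    then have "P p = 0" using Pvan[of p] cpos by auto
    then show ?thesis unfolding f_eq by simp
  qed
  have inner_bound: "\<bar>\<integral>z. norm (f (p, z)) \<partial>lborel\<bar> \<le> B * \<bar>P p\<bar>" for p
  proof (cases "snd p > 0")
    case True
    have "\<bar>\<integral>z. norm (f (p, z)) \<partial>lborel\<bar> = (\<integral>z. norm (f (p, z)) \<partial>lborel)"
      by simp
    also have "\<dots> \<le> (\<integral>z. B * \<bar>P p\<bar> * Gk (z - fst p) (snd p) \<partial>lborel)"
    proof (rule integral_mono)
      show "integrable lborel (\<lambda>z. norm (f (p, z)))" using inner_int[of p] by simp
      show "integrable lborel (\<lambda>z. B * \<bar>P p\<bar> * Gk (z - fst p) (snd p))"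
        by (intro integrable_mult_right Gk_shift_integrable True)
      fix z
      have "\<bar>W z\<bar> \<le> B" using WB[of z] by linarith
      moreover have g: "0 \<le> \<bar>P p\<bar> * Gk (z - fst p) (snd p)" using Gk_pos[of "z - fst p" "snd p"] by simp
      ultimately have "\<bar>W z\<bar> * (\<bar>P p\<bar> * Gk (z - fst p) (snd p)) \<le> B * (\<bar>P p\<bar> * Gk (z - fst p) (snd p))"
        by (rule mult_right_mono)
      then show "norm (f (p, z)) \<le> B * \<bar>P p\<bar> * Gk (z - fst p) (snd p)"
        unfolding f_eq using Gk_pos[of "z - fst p" "snd p"]
        by (simp add: abs_mult algebra_simps)
    qed
    also have "\<dots> = B * \<bar>P p\<bar>" using Gk_shift_integral[OF True] by simp
    finally show ?thesis .
  next
    case False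
    then have "P p = 0" using Pvan[of p] cpos by auto
    then show ?thesis unfolding f_eq by simp
  qed
  have int_f: "integrable (lborel \<Otimes>\<^sub>M lborel) f"
  proof (rule lborel_pair.Fubini_integrable)
    show "f \<in> borel_measurable (lborel \<Otimes>\<^sub>M lborel)" by (rule mf)
    show "AE x in lborel. integrable lborel (\<lambda>y. f (x, y))" using inner_int by simp
    show "integrable lborel (\<lambda>x. \<integral>y. norm (f (x, y)) \<partial>lborel)"
    proof (rule Bochner_Integration.integrable_bound)
      show "integrable lborel (\<lambda>p. B * \<bar>P p\<bar>)" by (intro integrable_mult_right intP)
      show "(\<lambda>x. \<integral>y. norm (f (x, y)) \<partial>lborel) \<in> borel_measurable lborel"
        by (rule lborel.borel_measurable_lebesgue_integral) (use mf in simp)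
      show "AE x in lborel. norm (\<integral>y. norm (f (x, y)) \<partial>lborel) \<le> norm (B * \<bar>P x\<bar>)"
      proof (rule AE_I2)
        fix x
        show "norm (\<integral>y. norm (f (x, y)) \<partial>lborel) \<le> norm (B * \<bar>P x\<bar>)"
          using inner_bound[of x] abs_ge_self[of "B * \<bar>P x\<bar>"] unfolding real_norm_def by linarith
      qed
    qed
  qed
  have "(\<integral>p. Yf W p * P p \<partial>lborel) = (\<integral>p. (\<integral>z. f (p, z) \<partial>lborel) \<partial>lborel)"
    by (simp add: inner_eq)
  also have "\<dots> = (\<integral>z. (\<integral>p. f (p, z) \<partial>lborel) \<partial>lborel)"
    using lborel_pair.Fubini_integral[of "\<lambda>p z. f (p, z)"] int_f by simp
  also have "\<dots> = (\<integral>z. 0 \<partial>lborel)"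
  proof -
    have "(\<integral>p. f (p, z) \<partial>lborel) = 0" for z
    proof -
      have "(\<integral>p. f (p, z) \<partial>lborel) = W z * (\<integral>p. Gk (z - fst p) (snd p) * (\<psi>t p + \<psi>xx p) \<partial>lborel)"
        unfolding f_eq P_def by (simp add: mult.assoc)
      also have "\<dots> = 0"
        using core_z[OF c1 c2 c3 c4 dt dx dxx ab cpos cd van] by simp
      finally show ?thesis .
    qed
    then show ?thesis by simp
  qed
  finally show ?thesis by (simp add: P_def)
qed

end



lemma singleton_null_leb: "{x::real} \<in> null_sets lebesgue"
proof -
  have "{x} \<in> null_sets lborel" by (rule countable_imp_null_set_lborel) simp
  then show ?thesis by (rule null_sets_completionI)
qed

lemma H10_cont:
  assumes "H10 u0"
  obtains w where "continuous_on {0..1} w" "w 0 = 0" "w 1 = 0"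
    "AE x in lebesgue. x \<in> {0<..<1} \<longrightarrow> u0 x = w x"
proof -
  from assms obtain w v where L2: "L2_on {0<..<1} v"
    and wdef: "\<forall>x\<in>{0..1}. w x = (LINT s:{0..x}|lebesgue. v s)"
    and w1: "w 1 = 0" and ae: "AE x in lebesgue. x \<in> {0<..<1} \<longrightarrow> u0 x = w x"
    unfolding H10_def by blast
  define v1 where "v1 z = indicator {0<..<1::real} z * v z" for z
  have m1: "v1 \<in> borel_measurable lebesgue"
    using L2 unfolding L2_on_def v1_def by simp
  have i2: "integrable lebesgue (\<lambda>z. indicator {0<..<1::real} z * (v z)\<^sup>2)"
    using L2 unfolding L2_on_def by simp
  have i0: "integrable lebesgue (indicator {0<..<1::real} :: real \<Rightarrow> real)"
    using lmeasurable_box[of "0::real" 1] by (simp add: lmeasurable_iff_integrable)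
  have iv1: "integrable lebesgue v1"
  proof (rule Bochner_Integration.integrable_bound)
    show "integrable lebesgue (\<lambda>z. indicator {0<..<1::real} z + indicator {0<..<1::real} z * (v z)\<^sup>2)"
      using i0 i2 by (rule Bochner_Integration.integrable_add)
    show "v1 \<in> borel_measurable lebesgue" by (rule m1)
    show "AE z in lebesgue. norm (v1 z) \<le> norm (indicator {0<..<1::real} z + indicator {0<..<1::real} z * (v z)\<^sup>2)"
    proof (rule AE_I2)
      fix z
      have "\<bar>v z\<bar> \<le> 1 + (v z)\<^sup>2"
      proof (cases "\<bar>v z\<bar> \<le> 1")
        case False
        then have "\<bar>v z\<bar> * 1 \<le> \<bar>v z\<bar> * \<bar>v z\<bar>" by (intro mult_left_mono) auto
        then have "\<bar>v z\<bar> \<le> v z * v z" by (simp add: abs_mult_self)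
        then show ?thesis by (simp add: power2_eq_square)
      qed (simp add: add_increasing2)
      then show "norm (v1 z) \<le> norm (indicator {0<..<1::real} z + indicator {0<..<1::real} z * (v z)\<^sup>2)"
        by (simp add: v1_def indicator_def)
    qed
  qed
  have seti: "set_integrable lebesgue S v1" if "S \<in> sets lebesgue" for S
    unfolding set_integrable_def by (rule integrable_mult_indicator[OF that iv1])
  have weq: "w x = integral {0..x} v1" if x: "x \<in> {0..1}" for x
  proof -
    have "w x = (LINT s:{0..x}|lebesgue. v s)" using wdef x by blast
    also have "\<dots> = (LINT s:{0..x}|lebesgue. v1 s)"
      unfolding set_lebesgue_integral_def
    proof (rule integral_discrete_difference[where X="{0,1}"])
      show "countable {0::real, 1}" by simp
      fix s :: real assume "s \<in> {0, 1}"
      show "emeasure lebesgue {s} = 0" using singleton_null_leb[of s] by auto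
      show "{s} \<in> sets lebesgue" using singleton_null_leb[of s] by auto
    next
      fix s :: real assume "s \<in> space lebesgue" "s \<notin> {0, 1}"
      then show "indicator {0..x} s *\<^sub>R v s = indicator {0..x} s *\<^sub>R v1 s"
        using x by (auto simp: v1_def indicator_def)
    qed
    also have "\<dots> = integral {0..x} v1"
      by (rule set_lebesgue_integral_eq_integral(2)[OF seti]) simp
    finally show ?thesis .
  qed
  have "v1 integrable_on {0..1}"
    by (rule set_lebesgue_integral_eq_integral(1)[OF seti]) simp
  then have c: "continuous_on {0..1} (\<lambda>x. integral {0..x} v1)"
    by (rule indefinite_integral_continuous_1)
  have "continuous_on {0..1} w"
    using c by (rule continuous_on_cong[THEN iffD1, OF refl, rotated]) (simp add: weq)
  moreover have "w 0 = 0" using weq[of 0] by simp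
  ultimately show ?thesis using that w1 ae by blast
qed




lemma periodic_ext:
  fixes w :: "real \<Rightarrow> real"
  assumes wc: "continuous_on {0..1} w" and w0: "w 0 = 0" and w1: "w 1 = 0"
  obtains W B where "continuous_on UNIV W" "\<And>x. \<bar>W x\<bar> \<le> B" "\<And>x. W (- x) = - W x"
    "\<And>x. W (1 + x) = - W (1 - x)" "\<And>x. x \<in> {0..1} \<Longrightarrow> W x = w x"
proof -
  define wc where "wc x = w (max 0 (min 1 x))" for x
  define oddx where "oddx x = wc x - wc (- x)" for x
  have cwc: "continuous_on UNIV wc"
    unfolding wc_def by (rule continuous_on_compose2[OF wc]) (auto intro!: continuous_intros)
  have co: "continuous_on UNIV oddx"
    unfolding oddx_def by (intro continuous_intros continuous_on_compose2[OF cwc]) auto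
  have o_odd: "oddx (- x) = - oddx x" for x by (simp add: oddx_def)
  have o_eq: "oddx x = w x" if "x \<in> {0..1}" for x
    using that w0 by (simp add: oddx_def wc_def)
  have o1: "oddx 1 = 0" "oddx (-1) = 0" using w0 w1 by (simp_all add: oddx_def wc_def)
  define K where "K (x::real) = (SOME k::int. \<bar>x - 2 * of_int k\<bar> \<le> 1)" for x
  define W where "W (x::real) = oddx (x - 2 * of_int (K x))" for x
  have Kex: "\<bar>x - 2 * of_int (K x)\<bar> \<le> 1" for x
  proof -
    let ?k = "\<lfloor>(x + 1) / 2\<rfloor>"
    have "of_int ?k \<le> (x + 1) / 2" "(x + 1) / 2 < of_int ?k + 1"
      by (rule of_int_floor_le, rule real_of_int_floor_add_one_gt)
    then have "\<bar>x - 2 * of_int ?k\<bar> \<le> 1" by (simp add: abs_le_iff field_simps)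
    then show ?thesis unfolding K_def by (rule someI)
  qed
  have W_eq: "W x = oddx (x - 2 * of_int k)" if k: "\<bar>x - 2 * of_int k\<bar> \<le> 1" for x k
  proof -
    have k0: "\<bar>x - 2 * of_int (K x)\<bar> \<le> 1" by (rule Kex)
    have "of_int (K x - k) \<le> (1::real)" "of_int (k - K x) \<le> (1::real)"
      using k k0 by (simp_all add: abs_le_iff)
    then have "K x - k \<le> 1" "k - K x \<le> 1" by linarith+
    then consider "K x = k" | "K x = k + 1" | "K x = k - 1" by linarith
    then show ?thesis
    proof cases
      case 1 then show ?thesis by (simp add: W_def)
    next
      case 2
      then have "x - 2 * of_int k = 1" "x - 2 * of_int (K x) = -1" using k k0 by (auto simp: abs_le_iff)
      then show ?thesis using o1 by (simp add: W_def)
    next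
      case 3
      then have "x - 2 * of_int k = -1" "x - 2 * of_int (K x) = 1" using k k0 by (auto simp: abs_le_iff)
      then show ?thesis using o1 by (simp add: W_def)
    qed
  qed
  obtain B where B: "\<And>y. y \<in> {-1..1} \<Longrightarrow> \<bar>oddx y\<bar> \<le> B"
  proof -
    have "compact (oddx ` {-1..1})"
      by (rule compact_continuous_image[OF continuous_on_subset[OF co]]) auto
    then obtain B where "\<forall>y\<in>oddx ` {-1..1}. norm y \<le> B"
      using compact_imp_bounded bounded_iff by metis
    then have "\<And>y. y \<in> {-1..1} \<Longrightarrow> \<bar>oddx y\<bar> \<le> B" by auto
    then show ?thesis by (rule that)
  qed
  have WB: "\<bar>W x\<bar> \<le> B" for x
    unfolding W_def using B Kex[of x] by (simp add: abs_le_iff)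
  have Wodd: "W (- x) = - W x" for x
  proof -
    have "W (- x) = oddx (- x - 2 * of_int (- K x))"
      by (rule W_eq) (use Kex[of x] in \<open>simp add: abs_le_iff\<close>)
    also have "\<dots> = - W x" using o_odd[of "x - 2 * of_int (K x)"] by (simp add: W_def)
    finally show ?thesis .
  qed
  have Wodd1: "W (1 + x) = - W (1 - x)" for x
  proof -
    have "W (1 - x) = oddx ((1 - x) - 2 * of_int (1 - K (1 + x)))"
      by (rule W_eq) (use Kex[of "1 + x"] in \<open>simp add: abs_le_iff\<close>)
    also have "(1 - x) - 2 * of_int (1 - K (1 + x)) = - (1 + x - 2 * of_int (K (1 + x)))" by simp
    also have "oddx (- (1 + x - 2 * of_int (K (1 + x)))) = - W (1 + x)" by (simp only: o_odd W_def)
    finally show ?thesis by simp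
  qed
  have Wloc: "continuous_on {2 * of_int k - 1 .. 2 * of_int k + 1} W" for k :: int
  proof -
    have "continuous_on {2 * of_int k - 1 .. 2 * of_int k + 1} (\<lambda>x. oddx (x - 2 * of_int k))"
      by (intro continuous_on_compose2[OF co] continuous_intros) auto
    then show ?thesis
      apply (rule continuous_on_cong[THEN iffD1, OF refl, rotated])
      subgoal for y using W_eq[of y k] by (auto simp: abs_le_iff)
      done
  qed
  have Wc: "continuous_on UNIV W"
  proof (rule continuous_at_imp_continuous_on, intro ballI)
    fix x :: real
    define k where "k = \<lfloor>(x + 1) / 2\<rfloor>"
    have kk: "of_int k \<le> (x + 1) / 2" "(x + 1) / 2 < of_int k + 1"
      unfolding k_def by (rule of_int_floor_le, rule real_of_int_floor_add_one_gt)
    have "continuous_on ({2 * of_int (k - 1) - 1 .. 2 * of_int (k - 1) + 1} \<union> {2 * of_int k - 1 .. 2 * of_int k + 1} \<union> {2 * of_int (k + 1) - 1 .. 2 * of_int (k + 1) + 1}) W"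
      by (intro continuous_on_closed_Un Wloc) auto
    moreover have "{2 * of_int (k - 1) - 1 .. 2 * of_int (k - 1) + 1} \<union> {2 * of_int k - 1 .. 2 * of_int k + 1} \<union> {2 * of_int (k + 1) - 1 .. 2 * of_int (k + 1) + 1} = {2 * of_int k - 3 .. 2 * of_int k + (3::real)}"
      by auto
    ultimately have "continuous_on {2 * of_int k - 3 .. 2 * of_int k + (3::real)} W" by simp
    moreover have "x \<in> interior {2 * of_int k - 3 .. 2 * of_int k + (3::real)}"
      using kk by simp
    ultimately show "isCont W x" by (rule continuous_on_interior)
  qed
  have Weq: "W x = w x" if "x \<in> {0..1}" for x
    using W_eq[of x 0] that o_eq by auto
  show ?thesis using that[OF Wc WB Wodd Wodd1 Weq] .
qed




definition chi :: "real \<Rightarrow> real \<Rightarrow> real" where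
  "chi a t = (max 0 (1 - t / a))\<^sup>2"

definition chid :: "real \<Rightarrow> real \<Rightarrow> real" where
  "chid a t = - 2 * max 0 (1 - t / a) / a"

lemma chi_cont: "a > 0 \<Longrightarrow> continuous_on UNIV (chi a)"
  unfolding chi_def by (intro continuous_intros) auto

lemma chid_cont: "a > 0 \<Longrightarrow> continuous_on UNIV (chid a)"
  unfolding chid_def by (intro continuous_intros) auto

lemma chi_0: "chi a 0 = 1" by (simp add: chi_def)

lemma chi_van: "a > 0 \<Longrightarrow> t \<ge> a \<Longrightarrow> chi a t = 0"
  by (simp add: chi_def)

lemma chid_van: "a > 0 \<Longrightarrow> t \<ge> a \<Longrightarrow> chid a t = 0"
  by (simp add: chid_def)

lemma chi_deriv: assumes a: "a > 0" shows "(chi a has_real_derivative chid a t) (at t)"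
proof -
  consider "t < a" | "t > a" | "t = a" by linarith
  then show ?thesis
  proof cases
    case 1
    have ev: "eventually (\<lambda>y. chi a y = (1 - y / a)\<^sup>2) (nhds t)"
    proof (rule eventually_nhds_in_open[of "{..<a}", THEN eventually_mono])
      show "open {..<a}" by simp
      show "t \<in> {..<a}" using 1 by simp
      fix y assume "y \<in> {..<a}" then show "chi a y = (1 - y / a)\<^sup>2"
        using a by (simp add: chi_def field_simps)
    qed
    have d: "((\<lambda>y. (1 - y / a)\<^sup>2) has_real_derivative chid a t) (at t)"
      apply (rule derivative_eq_intros refl | use a in force)+
      using 1 a by (simp add: chid_def field_simps)
    show ?thesis using d DERIV_cong_ev[OF refl ev refl] by simp
  next
    case 2
    have ev: "eventually (\<lambda>y. chi a y = 0) (nhds t)"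
    proof (rule eventually_nhds_in_open[of "{a<..}", THEN eventually_mono])
      show "open {a<..}" by simp
      show "t \<in> {a<..}" using 2 by simp
      fix y assume "y \<in> {a<..}" then show "chi a y = 0"
        using a by (simp add: chi_def field_simps)
    qed
    have "chid a t = 0" using 2 a by (simp add: chid_def field_simps)
    then show ?thesis using DERIV_cong_ev[OF refl ev refl, of 0] by simp
  next
    case 3
    have ca: "chi a a = 0" "chid a a = 0" using a by (simp_all add: chi_def chid_def)
    have "((\<lambda>y. (chi a y - chi a a) / (y - a)) \<longlongrightarrow> 0) (at a)"
    proof (rule Lim_null_comparison)
      show "eventually (\<lambda>y. norm ((chi a y - chi a a) / (y - a)) \<le> \<bar>y - a\<bar> / a\<^sup>2) (at a)"
      proof (rule always_eventually, rule allI)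
        fix y
        have m: "max 0 (1 - y / a) \<le> \<bar>y - a\<bar> / a"
          using a by (auto simp: field_simps abs_if)
        have "(max 0 (1 - y / a))\<^sup>2 \<le> (\<bar>y - a\<bar> / a)\<^sup>2"
          by (rule power_mono[OF m]) simp
        then have "chi a y \<le> (y - a)\<^sup>2 / a\<^sup>2" by (simp add: chi_def power_divide)
        moreover have "chi a y \<ge> 0" by (simp add: chi_def)
        ultimately show "norm ((chi a y - chi a a) / (y - a)) \<le> \<bar>y - a\<bar> / a\<^sup>2"
          using a ca
          by (cases "y = a") (auto simp: abs_div power2_eq_square divide_simps abs_mult_self
              intro: order_trans)
      qed
      show "((\<lambda>y. \<bar>y - a\<bar> / a\<^sup>2) \<longlongrightarrow> 0) (at a)"
        by (rule tendsto_eq_intros refl | use a in simp)+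
    qed
    then show ?thesis using 3 ca by (simp add: has_field_derivative_iff)
  qed
qed




lemma borel_to_lebesgue: "f \<in> borel_measurable borel \<Longrightarrow> f \<in> borel_measurable lebesgue"
  by (rule measurable_completion) simp

lemma L2_QT:
  fixes h :: "real \<times> real \<Rightarrow> real"
  assumes T: "T > 0" and hc: "continuous_on ({0..1} \<times> {0..T/4}) h"
    and hv: "\<And>p. snd p \<ge> T / 4 \<Longrightarrow> h p = 0"
  shows "L2_on (QT T) h"
proof -
  define C where "C = ({0..1} \<times> {0..T/4} :: (real \<times> real) set)"
  have compC: "compact C" unfolding C_def by (intro compact_Times) auto
  have sQ: "QT T \<in> sets borel" unfolding QT_def by (intro borel_open open_Times) auto
  have sC: "C \<in> sets borel" using compC by (intro borel_closed compact_imp_closed)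
  have eq: "indicator (QT T) p * h p = indicator (QT T) p * (indicator C p *\<^sub>R h p)" for p
  proof (cases "p \<in> QT T")
    case True
    show ?thesis
    proof (cases "p \<in> C")
      case False
      with True have "snd p \<ge> T / 4" by (cases p) (auto simp: QT_def C_def)
      then show ?thesis using hv by simp
    qed simp
  qed simp
  have m1: "(\<lambda>p. indicator C p *\<^sub>R h p) \<in> borel_measurable borel"
    using sC hc unfolding C_def by (intro borel_measurable_continuous_on_indicator) auto
  have m: "(\<lambda>p. indicator (QT T) p * h p) \<in> borel_measurable borel"
    unfolding eq using m1 sQ by measurable
  have i1: "integrable lborel (\<lambda>p. indicator C p *\<^sub>R (h p)\<^sup>2)"
    using compC hc unfolding C_def by (intro borel_integrable_compact continuous_intros) auto
  have i2: "integrable lborel (\<lambda>p. indicator (QT T) p *\<^sub>R (indicator C p *\<^sub>R (h p)\<^sup>2))"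
    by (rule integrable_mult_indicator[OF _ i1]) (use sQ in simp)
  have eq2: "(\<lambda>p. indicator (QT T) p * (h p)\<^sup>2) = (\<lambda>p. indicator (QT T) p *\<^sub>R (indicator C p *\<^sub>R (h p)\<^sup>2))"
  proof
    fix p
    have "indicator (QT T) p * (h p)\<^sup>2 = indicator (QT T) p * h p * h p" by (simp add: power2_eq_square)
    also have "\<dots> = indicator (QT T) p * (indicator C p *\<^sub>R h p) * h p" by (simp add: eq[of p])
    also have "\<dots> = indicator (QT T) p *\<^sub>R (indicator C p *\<^sub>R (h p)\<^sup>2)"
      by (simp add: power2_eq_square indicator_def)
    finally show "indicator (QT T) p * (h p)\<^sup>2 = indicator (QT T) p *\<^sub>R (indicator C p *\<^sub>R (h p)\<^sup>2)" .
  qed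
  have m2: "(\<lambda>p. indicator (QT T) p * (h p)\<^sup>2) \<in> borel_measurable borel"
    using i2[THEN borel_measurable_integrable] unfolding eq2 by simp
  have "integrable lebesgue (\<lambda>p. indicator (QT T) p * (h p)\<^sup>2)"
    using i2 m2 unfolding eq2 by (subst integrable_completion) auto
  then show ?thesis unfolding L2_on_def using borel_to_lebesgue[OF m] by simp
qed

lemma deriv_van_x:
  fixes K :: "(real \<times> real) set" and f :: "real \<times> real \<Rightarrow> real"
  assumes K: "closed K" and v: "\<And>p. p \<notin> K \<Longrightarrow> f p = 0"
    and d: "((\<lambda>x'. f (x', t)) has_real_derivative D) (at x)" and nK: "(x, t) \<notin> K"
  shows "D = 0"
proof -
  have "open (- K)" using K by auto
  then obtain e where e: "e > 0" "ball (x, t) e \<subseteq> - K" using nK by (meson ComplI open_contains_ball)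
  have ev: "eventually (\<lambda>x'. f (x', t) = 0) (nhds x)"
  proof (rule eventually_nhds_in_open[of "ball x e", THEN eventually_mono])
    show "open (ball x e)" by simp
    show "x \<in> ball x e" using e by simp
    fix x' assume "x' \<in> ball x e"
    then have "(x', t) \<in> ball (x, t) e" by (simp add: dist_Pair_Pair dist_commute)
    then show "f (x', t) = 0" using e v by auto
  qed
  have "((\<lambda>x'. f (x', t)) has_real_derivative 0) (at x)"
    using DERIV_cong_ev[OF refl ev refl, of 0] by simp
  then show ?thesis using d DERIV_unique by blast
qed

lemma deriv_van_t:
  fixes K :: "(real \<times> real) set" and f :: "real \<times> real \<Rightarrow> real"
  assumes K: "closed K" and v: "\<And>p. p \<notin> K \<Longrightarrow> f p = 0"
    and d: "((\<lambda>t'. f (x, t')) has_real_derivative D) (at t)" and nK: "(x, t) \<notin> K"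
  shows "D = 0"
proof -
  have "open (- K)" using K by auto
  then obtain e where e: "e > 0" "ball (x, t) e \<subseteq> - K" using nK by (meson ComplI open_contains_ball)
  have ev: "eventually (\<lambda>t'. f (x, t') = 0) (nhds t)"
  proof (rule eventually_nhds_in_open[of "ball t e", THEN eventually_mono])
    show "open (ball t e)" by simp
    show "t \<in> ball t e" using e by simp
    fix t' assume "t' \<in> ball t e"
    then have "(x, t') \<in> ball (x, t) e" by (simp add: dist_Pair_Pair dist_commute)
    then show "f (x, t') = 0" using e v by auto
  qed
  have "((\<lambda>t'. f (x, t')) has_real_derivative 0) (at t)"
    using DERIV_cong_ev[OF refl ev refl, of 0] by simp
  then show ?thesis using d DERIV_unique by blast
qed




context
  fixes W :: "real \<Rightarrow> real" and B :: real
  assumes Wc: "continuous_on UNIV W" and WB: "\<And>x. \<bar>W x\<bar> \<le> B"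
begin

lemma heat_weak_y:
  assumes T: "T > 0"
  shows "heat_weak (QT T) (\<lambda>p. chi (T/4) (snd p) * Yf W p) (\<lambda>p. chid (T/4) (snd p) * Yf W p)"
  unfolding heat_weak_def
proof (intro allI impI)
  fix \<phi> \<phi>t \<phi>x \<phi>xx :: "real \<times> real \<Rightarrow> real"
  assume tf: "test_fun (QT T) \<phi> \<phi>t \<phi>x \<phi>xx"
  define a where "a = T / 4"
  have a: "a > 0" using T by (simp add: a_def)
  have c1: "continuous_on UNIV \<phi>" and c2: "continuous_on UNIV \<phi>t"
    and c3: "continuous_on UNIV \<phi>x" and c4: "continuous_on UNIV \<phi>xx"
    and dt: "\<And>x t. ((\<lambda>t'. \<phi> (x, t')) has_real_derivative \<phi>t (x, t)) (at t)"
    and dx: "\<And>x t. ((\<lambda>x'. \<phi> (x', t)) has_real_derivative \<phi>x (x, t)) (at x)"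
    and dxx: "\<And>x t. ((\<lambda>x'. \<phi>x (x', t)) has_real_derivative \<phi>xx (x, t)) (at x)"
    using tf unfolding test_fun_def by auto
  obtain K where K: "compact K" "K \<subseteq> QT T" and Kv: "\<And>z. z \<notin> K \<Longrightarrow> \<phi> z = 0"
    using tf unfolding test_fun_def by auto
  have clK: "closed K" using K by (simp add: compact_imp_closed)
  have vx: "\<phi>x p = 0" if "p \<notin> K" for p
    using deriv_van_x[OF clK Kv dx, of "fst p" "snd p"] that by simp
  have vxx: "\<phi>xx p = 0" if "p \<notin> K" for p
    using deriv_van_x[OF clK vx dxx, of "fst p" "snd p"] that by simp
  have vt: "\<phi>t p = 0" if "p \<notin> K" for p
    using deriv_van_t[OF clK Kv dt, of "fst p" "snd p"] that by simp
  have KQ: "0 < fst p \<and> fst p < 1 \<and> 0 < snd p \<and> snd p < T" if "p \<in> K" for p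
    using K(2) that by (auto simp: QT_def)
  obtain c where c: "c > 0" "\<And>p. p \<in> K \<Longrightarrow> c < snd p" "c < T"
  proof (cases "K = {}")
    case True then show ?thesis using that[of "T / 2"] T by auto
  next
    case False
    have "compact (snd ` K)" by (rule compact_continuous_image[OF _ K(1)]) (intro continuous_intros)
    then obtain m where m: "m \<in> snd ` K" "\<And>y. y \<in> snd ` K \<Longrightarrow> m \<le> y"
      using compact_attains_inf[of "snd ` K"] False by auto
    have "m > 0" "m < T" using m(1) KQ by auto
    then show ?thesis using that[of "m / 2"] m(2) by fastforce
  qed
  have box: "p \<notin> K" if "p \<notin> {-1<..<2} \<times> {c<..<T+1}" for p
    using that KQ[of p] c(2)[of p] by (cases p) auto
  define \<psi> where "\<psi> p = chi a (snd p) * \<phi> p" for p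
  define \<psi>t where "\<psi>t p = chid a (snd p) * \<phi> p + chi a (snd p) * \<phi>t p" for p
  define \<psi>x where "\<psi>x p = chi a (snd p) * \<phi>x p" for p
  define \<psi>xx where "\<psi>xx p = chi a (snd p) * \<phi>xx p" for p
  have cchi: "continuous_on UNIV (\<lambda>p::real\<times>real. chi a (snd p))"
    by (rule continuous_on_compose2[OF chi_cont[OF a]]) (auto intro: continuous_intros)
  have cchid: "continuous_on UNIV (\<lambda>p::real\<times>real. chid a (snd p))"
    by (rule continuous_on_compose2[OF chid_cont[OF a]]) (auto intro: continuous_intros)
  have I0: "(\<integral>p. Yf W p * (\<psi>t p + \<psi>xx p) \<partial>lborel) = 0"
  proof (rule core[OF Wc WB])
    show "continuous_on UNIV \<psi>" unfolding \<psi>_def by (intro continuous_intros cchi c1)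
    show "continuous_on UNIV \<psi>t" unfolding \<psi>t_def by (intro continuous_intros cchi cchid c1 c2)
    show "continuous_on UNIV \<psi>x" unfolding \<psi>x_def by (intro continuous_intros cchi c3)
    show "continuous_on UNIV \<psi>xx" unfolding \<psi>xx_def by (intro continuous_intros cchi c4)
    show "((\<lambda>t'. \<psi> (x, t')) has_real_derivative \<psi>t (x, t)) (at t)" for x t
    proof -
      have "((\<lambda>t'. chi a t' * \<phi> (x, t')) has_real_derivative chid a t * \<phi> (x, t) + \<phi>t (x, t) * chi a t) (at t)"
        by (rule DERIV_mult[OF chi_deriv[OF a] dt])
      then show ?thesis unfolding \<psi>_def \<psi>t_def by (simp add: mult.commute)
    qed
    show "((\<lambda>x'. \<psi> (x', t)) has_real_derivative \<psi>x (x, t)) (at x)" for x t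
      unfolding \<psi>_def \<psi>x_def by (simp add: DERIV_cmult[OF dx])
    show "((\<lambda>x'. \<psi>x (x', t)) has_real_derivative \<psi>xx (x, t)) (at x)" for x t
      unfolding \<psi>x_def \<psi>xx_def by (simp add: DERIV_cmult[OF dxx])
    show "(-1::real) < 2" "0 < c" "c < T + 1" using c T by auto
    fix p :: "real \<times> real" assume "p \<notin> {-1<..<2} \<times> {c<..<T+1}"
    then have "p \<notin> K" by (rule box)
    then show "\<psi> p = 0 \<and> \<psi>x p = 0 \<and> \<psi>t p = 0 \<and> \<psi>xx p = 0"
      using Kv vx vt vxx by (simp add: \<psi>_def \<psi>x_def \<psi>t_def \<psi>xx_def)
  qed
  define L where "L p = - (chi a (snd p) * Yf W p * (\<phi>t p + \<phi>xx p))" for p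
  define R where "R p = chid a (snd p) * Yf W p * \<phi> p" for p
  have KY: "continuous_on K (Yf W)"
    by (rule continuous_on_subset[OF Y_cont[OF Wc WB]]) (use KQ in \<open>auto simp: less_eq_real_def\<close>)
  have eqL: "(\<lambda>z. indicator (QT T) z * (chi (T/4) (snd z) * Yf W z) * (- \<phi>t z - \<phi>xx z)) = L"
  proof
    fix z show "indicator (QT T) z * (chi (T/4) (snd z) * Yf W z) * (- \<phi>t z - \<phi>xx z) = L z"
    proof (cases "z \<in> QT T")
      case False then have "z \<notin> K" using K(2) by auto
      then show ?thesis using vt vxx False by (simp add: L_def)
    qed (simp add: L_def a_def algebra_simps)
  qed
  have eqR: "(\<lambda>z. indicator (QT T) z * (chid (T/4) (snd z) * Yf W z) * \<phi> z) = R"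
  proof
    fix z show "indicator (QT T) z * (chid (T/4) (snd z) * Yf W z) * \<phi> z = R z"
    proof (cases "z \<in> QT T")
      case False then have "z \<notin> K" using K(2) by auto
      then show ?thesis using Kv False by (simp add: R_def)
    qed (simp add: R_def a_def)
  qed
  have iL: "integrable lborel L"
  proof -
    have "integrable lborel (\<lambda>p. indicator K p *\<^sub>R L p)"
      unfolding L_def
      by (intro borel_integrable_compact K(1) continuous_intros KY
          continuous_on_subset[OF cchi] continuous_on_subset[OF c2] continuous_on_subset[OF c4]) auto
    moreover have "(\<lambda>p. indicator K p *\<^sub>R L p) = L"
    proof
      fix p show "indicator K p *\<^sub>R L p = L p"
        by (cases "p \<in> K") (simp_all add: L_def vt vxx)
    qed
    ultimately show ?thesis by simp
  qed
  have iR: "integrable lborel R"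
  proof -
    have "integrable lborel (\<lambda>p. indicator K p *\<^sub>R R p)"
      unfolding R_def
      by (intro borel_integrable_compact K(1) continuous_intros KY
          continuous_on_subset[OF cchid] continuous_on_subset[OF c1]) auto
    moreover have "(\<lambda>p. indicator K p *\<^sub>R R p) = R"
    proof
      fix p show "indicator K p *\<^sub>R R p = R p"
        by (cases "p \<in> K") (simp_all add: R_def Kv)
    qed
    ultimately show ?thesis by simp
  qed
  have LR: "L p - R p = - (Yf W p * (\<psi>t p + \<psi>xx p))" for p
    by (simp add: L_def R_def \<psi>t_def \<psi>xx_def algebra_simps)
  have "integral\<^sup>L lborel L - integral\<^sup>L lborel R = integral\<^sup>L lborel (\<lambda>p. L p - R p)"
    using iL iR by simp
  also have "\<dots> = 0" unfolding LR using I0 by simp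
  finally have LReq: "integral\<^sup>L lborel L = integral\<^sup>L lborel R" by simp
  have "integral\<^sup>L lebesgue L = integral\<^sup>L lborel L"
    by (rule integral_completion) (use borel_measurable_integrable[OF iL] in simp)
  moreover have "integral\<^sup>L lebesgue R = integral\<^sup>L lborel R"
    by (rule integral_completion) (use borel_measurable_integrable[OF iR] in simp)
  ultimately show "(LINT z|lebesgue. indicator (QT T) z * (chi (T/4) (snd z) * Yf W z) * (- \<phi>t z - \<phi>xx z))
      = (LINT z|lebesgue. indicator (QT T) z * (chid (T/4) (snd z) * Yf W z) * \<phi> z)"
    unfolding eqL eqR using LReq by simp
qed

end




theorem lemma4:
  fixes \<omega> :: "real set" and T T1 lam :: real and \<psi> u0 :: "real \<Rightarrow> real"
    and \<theta> :: "real \<Rightarrow> real \<Rightarrow> real"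
  assumes "open \<omega>" "\<omega> \<noteq> {}" "closure \<omega> \<subseteq> {0<..<1}"
    and "T > 0" and "0 < T1" "T1 < min (1/4) (3 * T / 8)" and "lam \<ge> 1"
    and "psi_adm \<omega> \<psi>"
    and "H10 u0"
  shows "\<exists>y f. L2_on (QT T) y \<and> L2_on (qT \<omega> T) f
           \<and> (\<forall>s\<ge>0. theta_adm T T1 lam s (\<theta> s) \<longrightarrow> (y, f) \<in> adm_set \<omega> T lam \<psi> (\<theta> s) s u0)"
proof -
  have T: "T > 0" by fact
  obtain w where wc: "continuous_on {0..1} w" and w0: "w 0 = 0" and w1: "w 1 = 0"
    and aew: "AE x in lebesgue. x \<in> {0<..<1} \<longrightarrow> u0 x = w x"
    using H10_cont[OF assms(9)] by blast
  obtain W B where Wc: "continuous_on UNIV W" and WB: "\<And>x. \<bar>W x\<bar> \<le> B"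
    and Wodd: "\<And>x. W (- x) = - W x" and Wodd1: "\<And>x. W (1 + x) = - W (1 - x)"
    and Weq: "\<And>x. x \<in> {0..1} \<Longrightarrow> W x = w x"
    using periodic_ext[OF wc w0 w1] by blast
  have a: "T / 4 > 0" using T by simp
  define y where "y p = chi (T/4) (snd p) * Yf W p" for p
  define g where "g p = chid (T/4) (snd p) * Yf W p" for p
  define C where "C = ({0..1} \<times> {0..T/4} :: (real \<times> real) set)"
  have YC: "continuous_on C (Yf W)"
    by (rule continuous_on_subset[OF Y_cont[OF Wc WB]]) (auto simp: C_def)
  have cchi: "continuous_on UNIV (\<lambda>p::real\<times>real. chi (T/4) (snd p))"
    by (rule continuous_on_compose2[OF chi_cont[OF a]]) (auto intro: continuous_intros)
  have cchid: "continuous_on UNIV (\<lambda>p::real\<times>real. chid (T/4) (snd p))"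
    by (rule continuous_on_compose2[OF chid_cont[OF a]]) (auto intro: continuous_intros)
  have yC: "continuous_on C y"
    unfolding y_def by (intro continuous_intros YC continuous_on_subset[OF cchi]) auto
  have gC: "continuous_on C g"
    unfolding g_def by (intro continuous_intros YC continuous_on_subset[OF cchid]) auto
  have yv: "y p = 0" if "snd p \<ge> T / 4" for p
    using chi_van[OF a that] by (simp add: y_def)
  have gv: "g p = 0" if "snd p \<ge> T / 4" for p
    using chid_van[OF a that] by (simp add: g_def)
  obtain \<psi>' where "\<forall>x\<in>{0..1}. (\<psi> has_real_derivative \<psi>' x) (at x within {0..1})"
    using assms(8) unfolding psi_adm_def by blast
  then have \<psi>c: "continuous_on {0..1} \<psi>" by (intro DERIV_continuous_on) auto
  have \<psi>C: "continuous_on C (\<lambda>z. \<psi> (fst z))"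
    by (rule continuous_on_compose2[OF \<psi>c]) (auto simp: C_def intro: continuous_intros)
  show ?thesis
  proof (intro exI conjI allI impI)
    show "L2_on (QT T) y"
      by (rule L2_QT[OF T yC[unfolded C_def] yv])
    show "L2_on (qT \<omega> T) (\<lambda>_. 0)"
      unfolding L2_on_def by simp
    fix s :: real assume s: "s \<ge> 0" and th: "theta_adm T T1 lam s (\<theta> s)"
    obtain \<theta>' where "\<forall>t\<in>{0..<T}. (\<theta> s has_real_derivative \<theta>' t) (at t within {0..<T})"
      using th unfolding theta_adm_def by blast
    then have \<theta>c: "continuous_on {0..<T} (\<theta> s)" by (intro DERIV_continuous_on) auto
    have \<theta>C: "continuous_on C (\<lambda>z. \<theta> s (snd z))"
      by (rule continuous_on_compose2[OF \<theta>c]) (use T in \<open>auto simp: C_def intro: continuous_intros\<close>)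
    have \<theta>ge: "\<theta> s t \<ge> 1" if "t \<in> {0..T/4}" for t
      using th that unfolding theta_adm_def by auto
    have rhoC: "continuous_on C (\<lambda>z. rho lam \<psi> (\<theta> s) s z * y z)"
      unfolding rho_def varphi_def psi_hat_def
      by (intro continuous_intros \<theta>C \<psi>C yC)
    have xiC: "continuous_on C (\<lambda>z. xi lam \<psi> (\<theta> s) z powr (-3/2))"
    proof (rule continuous_on_powr)
      show "continuous_on C (xi lam \<psi> (\<theta> s))"
        unfolding xi_def[abs_def] psi_hat_def by (intro continuous_intros \<theta>C \<psi>C)
      show "continuous_on C (\<lambda>z. - 3 / 2 :: real)" by (rule continuous_on_const)
      show "\<forall>z\<in>C. xi lam \<psi> (\<theta> s) z \<noteq> 0"
      proof
        fix z assume "z \<in> C"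
        then have "\<theta> s (snd z) \<ge> 1" using \<theta>ge by (auto simp: C_def)
        then show "xi lam \<psi> (\<theta> s) z \<noteq> 0" by (simp add: xi_def)
      qed
    qed
    have rho0C: "continuous_on C (\<lambda>z. rho0 lam \<psi> (\<theta> s) s z * g z)"
      unfolding rho0_def rho_def varphi_def psi_hat_def
      by (intro continuous_intros xiC \<theta>C \<psi>C gC)
    have L1: "L2_on (QT T) (\<lambda>z. rho lam \<psi> (\<theta> s) s z * y z)"
      by (rule L2_QT[OF T rhoC[unfolded C_def]]) (simp add: yv)
    have L3: "L2_on (QT T) (\<lambda>z. rho0 lam \<psi> (\<theta> s) s z * g z)"
      by (rule L2_QT[OF T rho0C[unfolded C_def]]) (simp add: gv)
    have HW: "heat_weak (QT T) y g"
      unfolding y_def[abs_def] g_def[abs_def] by (rule heat_weak_y[OF Wc WB T])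
    have cy: "continuous_on ({0..1} \<times> {0..<T}) y"
      unfolding y_def
      by (intro continuous_intros continuous_on_subset[OF cchi] continuous_on_subset[OF Y_cont[OF Wc WB]]) auto
    have ae: "AE x in lebesgue. x \<in> {0<..<1} \<longrightarrow> y (x, 0) = u0 x"
      using aew
    proof (rule AE_mp, intro AE_I2 impI)
      fix x :: real assume h: "x \<in> {0<..<1} \<longrightarrow> u0 x = w x" and x: "x \<in> {0<..<1}"
      have "y (x, 0) = W x" by (simp add: y_def chi_0 Y_init[OF Wc WB])
      also have "\<dots> = w x" using x by (intro Weq) auto
      finally show "y (x, 0) = u0 x" using h x by simp
    qed
    have bd: "\<forall>t\<in>{0<..<T}. y (0, t) = 0 \<and> y (1, t) = 0"
      by (simp add: y_def Y_left[OF Wc WB Wodd] Y_right[OF Wc WB Wodd1])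
    show "(y, \<lambda>_. 0) \<in> adm_set \<omega> T lam \<psi> (\<theta> s) s u0"
      unfolding adm_set_def
      using L1 L3 HW cy ae bd by (auto simp: L2_on_def)
  qed
qed


end
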